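(* Let $\|\cdot\|$ be a norm on $\mathbb{R}^2$ with unit sphere $S=\{x\in\mathbb{R}^2:\|x\|=1\}$. The following are equivalent: (i) $\|\cdot\|$ is not a URTC-norm; (ii) there exist $c,d\in S$ with $\|c-d\|>1$ such that the segment $[c,d]=\{c+t(d-c):0\le t\le 1\}$ is contained in $S$. In particular, every strictly convex norm on $\mathbb{R}^2$ is a URTC-norm.
   Context: A norm $\|\cdot\|$ on $\mathbb{R}^2$ is called a URTC-norm if for every $a,b\in\mathbb{R}^2$ with $\|a-b\|=1$ the system $\|a-x\|=1$, $\|b-x\|=1$ is satisfied by exactly two points $x\in\mathbb{R}^2$. A norm is strictly convex if its unit sphere contains no non-degenerate line segment. *)

theory Defs
  imports "HOL-Analysis.Analysis"
begin

definition is_norm :: "(real^2 \<Rightarrow> real) \<Rightarrow> bool" where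
  "is_norm N \<longleftrightarrow>
     (\<forall>x. N x = 0 \<longleftrightarrow> x = 0) \<and>
     (\<forall>a x. N (a *\<^sub>R x) = \<bar>a\<bar> * N x) \<and>
     (\<forall>x y. N (x + y) \<le> N x + N y)"

definition unit_sphere :: "(real^2 \<Rightarrow> real) \<Rightarrow> (real^2) set" where
  "unit_sphere N = {x. N x = 1}"

definition URTC_norm :: "(real^2 \<Rightarrow> real) \<Rightarrow> bool" where
  "URTC_norm N \<longleftrightarrow>
     (\<forall>a b. N (a - b) = 1 \<longrightarrow> card {x. N (a - x) = 1 \<and> N (b - x) = 1} = 2)"

definition strictly_convex_norm :: "(real^2 \<Rightarrow> real) \<Rightarrow> bool" where
  "strictly_convex_norm N \<longleftrightarrow>
     \<not> (\<exists>c d. c \<noteq> d \<and> closed_segment c d \<subseteq> unit_sphere N)"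

end

theory Submission
  imports Defs
begin

lemma N_scale: "is_norm N \<Longrightarrow> N (a *\<^sub>R x) = \<bar>a\<bar> * N x"
  by (simp add: is_norm_def)

lemma N_tri: "is_norm N \<Longrightarrow> N (x + y) \<le> N x + N y"
  by (simp add: is_norm_def)

lemma N_zero: "is_norm N \<Longrightarrow> N 0 = 0"
  by (simp add: is_norm_def)

lemma N_neg: "is_norm N \<Longrightarrow> N (- x) = N x"
  using N_scale[of N "-1" x] by simp

lemma N_commute: "is_norm N \<Longrightarrow> N (x - y) = N (y - x)"
  using N_neg[of N "x - y"] by simp

lemma N_nonneg: "is_norm N \<Longrightarrow> N x \<ge> 0"
proof -
  assume n: "is_norm N"
  have "N (x + - x) \<le> N x + N (-x)" using N_tri[OF n] .
  then show ?thesis using N_zero[OF n] N_neg[OF n, of x] by simp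
qed

lemma N_convex: assumes n: "is_norm N" and t: "0 \<le> t" "t \<le> 1"
  shows "N ((1 - t) *\<^sub>R x + t *\<^sub>R y) \<le> (1 - t) * N x + t * N y"
proof -
  have "N ((1 - t) *\<^sub>R x + t *\<^sub>R y) \<le> N ((1 - t) *\<^sub>R x) + N (t *\<^sub>R y)" using N_tri[OF n] .
  also have "\<dots> = (1 - t) * N x + t * N y" using N_scale[OF n] t by simp
  finally show ?thesis .
qed

lemma N_cont: assumes n: "is_norm N" shows "continuous_on UNIV N"
proof (rule convex_on_continuous)
  show "convex_on UNIV N" unfolding convex_on_def
  proof (intro conjI ballI allI impI)
    fix x y :: "real^2" and u v :: real
    assume "0 \<le> u" "0 \<le> v" "u + v = 1"
    then show "N (u *\<^sub>R x + v *\<^sub>R y) \<le> u * N x + v * N y"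
      using N_convex[OF n, of v x y] by (simp add: eq_diff_eq[symmetric])
  qed simp
qed simp

definition phi :: "real^2 \<Rightarrow> real^2 \<Rightarrow> real" where
  "phi u y = y$1 * u$2 - y$2 * u$1"

lemma phi_lin: "phi u (a *\<^sub>R x + b *\<^sub>R y) = a * phi u x + b * phi u y"
  by (simp add: phi_def algebra_simps)

lemma phi_diff: "phi u (x - y) = phi u x - phi u y"
  by (simp add: phi_def algebra_simps)

lemma phi_scale: "phi u (a *\<^sub>R x) = a * phi u x"
  by (simp add: phi_def algebra_simps)

lemma phi_self: "phi u u = 0"
  by (simp add: phi_def algebra_simps)

lemma phi_zero: assumes "u \<noteq> 0" "phi u z = 0" shows "\<exists>m. z = m *\<^sub>R u"
proof -
  have "u$1 \<noteq> 0 \<or> u$2 \<noteq> 0" using assms(1) by (auto simp: vec_eq_iff forall_2)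
  then show ?thesis
  proof
    assume h: "u$1 \<noteq> 0"
    have "z = (z$1 / u$1) *\<^sub>R u" using h assms(2)
      by (auto simp: vec_eq_iff forall_2 phi_def field_simps)
    then show ?thesis by blast
  next
    assume h: "u$2 \<noteq> 0"
    have "z = (z$2 / u$2) *\<^sub>R u" using h assms(2)
      by (auto simp: vec_eq_iff forall_2 phi_def field_simps)
    then show ?thesis by blast
  qed
qed

lemma Y_phi: assumes n: "is_norm N" and u: "N u = 1" and y: "N y = 1" "N (y - u) = 1"
  shows "phi u y \<noteq> 0"
proof
  assume "phi u y = 0"
  moreover have "u \<noteq> 0" using u N_zero[OF n] by auto
  ultimately obtain m where m: "y = m *\<^sub>R u" using phi_zero by blast
  have "y - u = (m - 1) *\<^sub>R u" using m by (simp add: algebra_simps)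
  then have "\<bar>m - 1\<bar> = 1" using y(2) N_scale[OF n] u by simp
  moreover have "\<bar>m\<bar> = 1" using y(1) m N_scale[OF n] u by simp
  ultimately show False by arith
qed

lemma line_lemma:
  fixes g :: "real \<Rightarrow> real"
  assumes cv: "\<And>a b t. 0 \<le> t \<Longrightarrow> t \<le> 1 \<Longrightarrow> g ((1 - t) * a + t * b) \<le> (1 - t) * g a + t * g b"
    and gm: "g m \<le> 1" and gM: "g M \<le> 1" and g0: "g s0 = 1" and lt: "m < s0" "s0 < M"
    and s: "m \<le> s" "s \<le> M"
  shows "g s = 1"
proof -
  define t where "t = (s - m) / (M - m)"
  have t: "0 \<le> t" "t \<le> 1" using s lt by (auto simp: t_def field_simps)
  have "(1 - t) * m + t * M = m + t * (M - m)" by (simp add: algebra_simps)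
  also have "t * (M - m) = s - m" using lt by (simp add: t_def)
  finally have "(1 - t) * m + t * M = s" by simp
  then have "g s \<le> (1 - t) * g m + t * g M" using cv[OF t, of m M] by simp
  also have "\<dots> \<le> (1 - t) * 1 + t * 1"
    using gm gM t by (intro add_mono mult_left_mono) auto
  finally have le: "g s \<le> 1" by simp
  have ge: "g s \<ge> 1"
  proof (cases "s \<le> s0")
    case True
    define r where "r = (s0 - s) / (M - s)"
    have r: "0 \<le> r" "r < 1" using True s lt by (auto simp: r_def field_simps)
    have "(1 - r) * s + r * M = s + r * (M - s)" by (simp add: algebra_simps)
    also have "r * (M - s) = s0 - s" using True lt by (simp add: r_def)
    finally have "(1 - r) * s + r * M = s0" by simp
    then have "1 \<le> (1 - r) * g s + r * g M" using cv[of r s M] r g0 by simp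
    also have "\<dots> \<le> (1 - r) * g s + r * 1" using gM r by (intro add_mono mult_left_mono) auto
    finally have "(1 - r) * 1 \<le> (1 - r) * g s" by (simp add: algebra_simps)
    then show ?thesis using r by simp
  next
    case False
    define r where "r = (s0 - m) / (s - m)"
    have r: "0 < r" "r \<le> 1" using False s lt by (auto simp: r_def field_simps)
    have "(1 - r) * m + r * s = m + r * (s - m)" by (simp add: algebra_simps)
    also have "r * (s - m) = s0 - m" using False lt by (simp add: r_def)
    finally have "(1 - r) * m + r * s = s0" by simp
    then have "1 \<le> (1 - r) * g m + r * g s" using cv[of r m s] r g0 by simp
    also have "\<dots> \<le> (1 - r) * 1 + r * g s" using gm r by (intro add_mono mult_left_mono) auto
    finally have "r * 1 \<le> r * g s" by (simp add: algebra_simps)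
    then show ?thesis using r by simp
  qed
  show ?thesis using le ge by simp
qed

definition concl :: "(real^2 \<Rightarrow> real) \<Rightarrow> bool" where
  "concl N \<longleftrightarrow> (\<exists>c d. c \<in> unit_sphere N \<and> d \<in> unit_sphere N \<and> N (c - d) > 1 \<and>
                   {c + t *\<^sub>R (d - c) | t. 0 \<le> t \<and> t \<le> 1} \<subseteq> unit_sphere N)"

lemma seg_lemma:
  assumes n: "is_norm N" and u: "N u = 1"
    and y1: "N y1 = 1" "N (y1 - u) = 1" and y2: "N y2 = 1" "N (y2 - u) = 1"
    and ne: "y1 \<noteq> y2" and l: "0 < l" "l \<le> 1" and mu: "y1 = l *\<^sub>R y2 + \<mu> *\<^sub>R u"
  shows "concl N"
proof -
  define p where "p = l *\<^sub>R y2"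
  define g where "g s = N (p + s *\<^sub>R u)" for s
  have cv: "g ((1 - t) * a + t * b) \<le> (1 - t) * g a + t * g b" if "0 \<le> t" "t \<le> 1" for a b t
  proof -
    have "p + ((1 - t) * a + t * b) *\<^sub>R u = (1 - t) *\<^sub>R (p + a *\<^sub>R u) + t *\<^sub>R (p + b *\<^sub>R u)"
      by (simp add: algebra_simps)
    then show ?thesis unfolding g_def using N_convex[OF n that] by simp
  qed
  have gA: "g (-1) \<le> 1"
  proof -
    have "p + (-1) *\<^sub>R u = (1 - l) *\<^sub>R (- u) + l *\<^sub>R (y2 - u)" by (simp add: p_def algebra_simps)
    then have "g (-1) \<le> (1 - l) * N (- u) + l * N (y2 - u)"
      unfolding g_def using N_convex[OF n, of l "-u" "y2 - u"] l by simp
    then show ?thesis using N_neg[OF n, of u] u y2 by simp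
  qed
  have gB: "g (1 - l) \<le> 1"
  proof -
    have "p + (1 - l) *\<^sub>R u = (1 - l) *\<^sub>R u + l *\<^sub>R y2" by (simp add: p_def algebra_simps)
    then have "g (1 - l) = N ((1 - l) *\<^sub>R u + l *\<^sub>R y2)" by (simp only: g_def)
    then have "g (1 - l) \<le> (1 - l) * N u + l * N y2"
      using N_convex[OF n, of l u y2] l by simp
    then show ?thesis using u y2 by simp
  qed
  have g1: "g \<mu> = 1" using y1 mu by (simp add: g_def p_def)
  have g2: "g (\<mu> - 1) = 1"
  proof -
    have "p + (\<mu> - 1) *\<^sub>R u = y1 - u" using mu by (simp add: p_def algebra_simps)
    then show ?thesis using y1 by (simp add: g_def)
  qed
  define m where "m = min (-1) (\<mu> - 1)"
  define M where "M = max (1 - l) \<mu>"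
  have gm: "g m \<le> 1" using gA g2 by (simp add: m_def min_def)
  have gM: "g M \<le> 1" using gB g1 by (simp add: M_def max_def)
  have "l = 1 \<longrightarrow> \<mu> \<noteq> 0" using mu ne by auto
  then have gap: "M - m > 1" using l by (auto simp: m_def M_def min_def max_def)
  define s0 where "s0 = (if \<mu> < M then \<mu> else \<mu> - 1)"
  have s0: "m < s0" "s0 < M" "g s0 = 1" using gap g1 g2
    by (auto simp: s0_def m_def M_def min_def max_def)
  have all: "g s = 1" if "m \<le> s" "s \<le> M" for s
    using line_lemma[of g m M s0 s, OF cv gm gM s0(3) s0(1,2) that] by simp
  define c where "c = p + m *\<^sub>R u"
  define d where "d = p + M *\<^sub>R u"
  have "c \<in> unit_sphere N" using all[of m] gap by (simp add: unit_sphere_def c_def g_def)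
  moreover have "d \<in> unit_sphere N" using all[of M] gap by (simp add: unit_sphere_def d_def g_def)
  moreover have "N (c - d) > 1"
  proof -
    have "c - d = (m - M) *\<^sub>R u" by (simp add: c_def d_def algebra_simps)
    then show ?thesis using N_scale[OF n] u gap by simp
  qed
  moreover have "{c + t *\<^sub>R (d - c) | t. 0 \<le> t \<and> t \<le> 1} \<subseteq> unit_sphere N"
  proof clarify
    fix t :: real assume t: "0 \<le> t" "t \<le> 1"
    have e: "c + t *\<^sub>R (d - c) = p + (m + t * (M - m)) *\<^sub>R u"
      by (simp add: c_def d_def algebra_simps)
    have "m \<le> m + t * (M - m)" using t gap by simp
    moreover have "m + t * (M - m) \<le> M"
    proof -
      have "t * (M - m) \<le> 1 * (M - m)" using t gap by (intro mult_right_mono) auto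
      then show ?thesis by simp
    qed
    ultimately show "c + t *\<^sub>R (d - c) \<in> unit_sphere N"
      using all e by (simp add: unit_sphere_def g_def)
  qed
  ultimately show ?thesis unfolding concl_def by blast
qed

lemma same_side:
  assumes n: "is_norm N" and u: "N u = 1"
    and y1: "N y1 = 1" "N (y1 - u) = 1" and y2: "N y2 = 1" "N (y2 - u) = 1"
    and ne: "y1 \<noteq> y2" and pos: "phi u y1 * phi u y2 > 0"
    and le: "\<bar>phi u y1\<bar> \<le> \<bar>phi u y2\<bar>"
  shows "concl N"
proof -
  define l where "l = phi u y1 / phi u y2"
  have nz: "phi u y2 \<noteq> 0" using pos by auto
  have l: "0 < l" "l \<le> 1"
  proof -
    show "0 < l" using pos by (simp add: l_def zero_less_mult_iff zero_less_divide_iff)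
    have "\<bar>l\<bar> \<le> 1" using le nz by (simp add: l_def abs_divide divide_le_eq_1)
    then show "l \<le> 1" by simp
  qed
  have "phi u (y1 - l *\<^sub>R y2) = 0" using nz by (simp add: phi_diff phi_scale l_def)
  moreover have "u \<noteq> 0" using u N_zero[OF n] by auto
  ultimately obtain \<mu> where "y1 - l *\<^sub>R y2 = \<mu> *\<^sub>R u" using phi_zero by blast
  then have "y1 = l *\<^sub>R y2 + \<mu> *\<^sub>R u" by (simp add: algebra_simps)
  then show ?thesis using seg_lemma[OF n u y1 y2 ne l] by blast
qed

lemma exists_pos:
  assumes n: "is_norm N" and u: "N u = 1"
  shows "\<exists>y. N y = 1 \<and> N (y - u) = 1 \<and> phi u y > 0"
proof -
  have u0: "u \<noteq> 0" using u N_zero[OF n] by auto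
  define w :: "real^2" where "w = vector [u$2, - u$1]"
  have w1: "w$1 = u$2" and w2: "w$2 = - u$1" by (simp_all add: w_def)
  have pw: "phi u w > 0"
  proof -
    have "u$1 \<noteq> 0 \<or> u$2 \<noteq> 0" using u0 by (auto simp: vec_eq_iff forall_2)
    then have "u$1 * u$1 + u$2 * u$2 > 0"
    proof
      assume "u$1 \<noteq> 0"
      then have "u$1 * u$1 > 0" by (auto simp: zero_less_mult_iff linorder_neq_iff)
      moreover have "u$2 * u$2 \<ge> 0" by simp
      ultimately show ?thesis by linarith
    next
      assume "u$2 \<noteq> 0"
      then have "u$2 * u$2 > 0" by (auto simp: zero_less_mult_iff linorder_neq_iff)
      moreover have "u$1 * u$1 \<ge> 0" by simp
      ultimately show ?thesis by linarith
    qed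
    then show ?thesis by (simp add: phi_def w1 w2)
  qed
  define v where "v th = cos th *\<^sub>R u + sin th *\<^sub>R w" for th
  have phiv: "phi u (v th) = sin th * phi u w" for th
    by (simp add: v_def phi_lin phi_self)
  have vnz: "N (v th) > 0" if "0 \<le> th" "th \<le> pi" for th
  proof -
    have "v th \<noteq> 0"
    proof (cases "sin th = 0")
      case True
      then have "cos th = 1 \<or> cos th = -1" using sin_cos_squared_add[of th]
        by (simp add: power2_eq_square) (metis mult_cancel_left1 mult_minus1_right square_eq_iff)
      then show ?thesis using True u0 by (auto simp: v_def)
    next
      case False
      then have "phi u (v th) \<noteq> 0" using phiv pw by simp
      then show ?thesis by (auto simp: phi_def)
    qed
    then show ?thesis using N_nonneg[OF n, of "v th"] n by (simp add: is_norm_def order_le_less)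
  qed
  define h where "h th = N ((1 / N (v th)) *\<^sub>R v th - u)" for th
  have cN: "continuous_on UNIV N" using N_cont[OF n] .
  have cv: "continuous_on {0..pi} v" unfolding v_def by (intro continuous_intros)
  have cNv: "continuous_on {0..pi} (\<lambda>th. N (v th))"
    using continuous_on_compose2[OF cN cv] by simp
  have ch: "continuous_on {0..pi} h" unfolding h_def
    apply (rule continuous_on_compose2[OF cN _ subset_UNIV])
    apply (intro continuous_intros cv cNv)
    using vnz by (metis atLeastAtMost_iff less_irrefl)
  have "h 0 = 0" using u by (simp add: h_def v_def N_zero[OF n])
  moreover have "h pi = 2"
  proof -
    have "v pi = - u" by (simp add: v_def)
    then have "h pi = N (- u - u)" using u N_neg[OF n, of u] by (simp add: h_def)
    also have "- u - u = - (2 *\<^sub>R u)" by (simp add: scaleR_2)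
    also have "N (- (2 *\<^sub>R u)) = 2" using N_neg[OF n] N_scale[OF n, of 2 u] u by simp
    finally show ?thesis .
  qed
  ultimately obtain th where th: "0 \<le> th" "th \<le> pi" "h th = 1"
    using IVT'[of h 0 1 pi] ch by auto
  have "th \<noteq> 0" "th \<noteq> pi" using th \<open>h 0 = 0\<close> \<open>h pi = 2\<close> by auto
  then have st: "sin th > 0" using th by (intro sin_gt_zero) auto
  define y where "y = (1 / N (v th)) *\<^sub>R v th"
  have "N y = 1" using vnz[OF th(1,2)] N_scale[OF n] by (simp add: y_def)
  moreover have "N (y - u) = 1" using th by (simp add: h_def y_def)
  moreover have "phi u y > 0" using vnz[OF th(1,2)] st pw
    by (simp add: y_def phi_scale phiv)
  ultimately show ?thesis by blast
qed

lemma same_side2: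
  assumes n: "is_norm N" and u: "N u = 1"
    and y1: "N y1 = 1" "N (y1 - u) = 1" and y2: "N y2 = 1" "N (y2 - u) = 1"
    and ne: "y1 \<noteq> y2" and pos: "phi u y1 * phi u y2 > 0"
  shows "concl N"
proof (cases "\<bar>phi u y1\<bar> \<le> \<bar>phi u y2\<bar>")
  case True
  then show ?thesis using same_side[OF n u y1 y2 ne pos] by blast
next
  case False
  then show ?thesis using same_side[OF n u y2 y1 ne[symmetric]] pos by (simp add: mult.commute)
qed

lemma dir1: assumes n: "is_norm N" and nu: "\<not> URTC_norm N" shows "concl N"
proof -
  obtain a b where ab: "N (a - b) = 1" and cX: "card {x. N (a - x) = 1 \<and> N (b - x) = 1} \<noteq> 2"
    using nu unfolding URTC_norm_def by blast
  define X where "X = {x. N (a - x) = 1 \<and> N (b - x) = 1}"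
  define u where "u = a - b"
  have u: "N u = 1" using ab by (simp add: u_def)
  have bx: "b - x = (a - x) - u" for x by (simp add: u_def)
  obtain y1 where y1: "N y1 = 1" "N (y1 - u) = 1" "phi u y1 > 0" using exists_pos[OF n u] by blast
  define y2 where "y2 = u - y1"
  have y2: "N y2 = 1" "N (y2 - u) = 1" "phi u y2 < 0"
    using y1 N_commute[OF n, of y1 u] N_neg[OF n, of y1]
    by (simp_all add: y2_def phi_diff phi_self)
  have x1: "a - y1 \<in> X" using y1 by (simp add: X_def bx)
  have x2: "a - y2 \<in> X" using y2 by (simp add: X_def bx)
  have ne: "a - y1 \<noteq> a - y2" using y1 y2 by auto
  have "X \<noteq> {a - y1, a - y2}" using cX ne unfolding X_def by auto
  then obtain x where x: "x \<in> X" "x \<noteq> a - y1" "x \<noteq> a - y2" using x1 x2 by blast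
  define y where "y = a - x"
  have y: "N y = 1" "N (y - u) = 1" using x(1) by (auto simp: X_def y_def bx)
  have yne: "y \<noteq> y1" "y \<noteq> y2" using x by (auto simp: y_def)
  have "phi u y \<noteq> 0" using Y_phi[OF n u y] .
  then consider "phi u y > 0" | "phi u y < 0" by linarith
  then show ?thesis
  proof cases
    case 1
    then show ?thesis using same_side2[OF n u y y1(1,2) yne(1)] y1(3) by simp
  next
    case 2
    then show ?thesis using same_side2[OF n u y y2(1,2) yne(2)] y2(3) by (simp add: mult_neg_neg)
  qed
qed

lemma dir2: assumes n: "is_norm N" and c: "concl N" shows "\<not> URTC_norm N"
proof
  assume ur: "URTC_norm N"
  obtain c d where cd: "c \<in> unit_sphere N" "d \<in> unit_sphere N" "N (c - d) > 1"
    and sg: "{c + t *\<^sub>R (d - c) | t. 0 \<le> t \<and> t \<le> 1} \<subseteq> unit_sphere N"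
    using c unfolding concl_def by blast
  have seg: "N (c + t *\<^sub>R (d - c)) = 1" if "0 \<le> t" "t \<le> 1" for t
    using sg that unfolding unit_sphere_def by blast
  define L where "L = N (c - d)"
  have L: "L > 1" using cd by (simp add: L_def)
  define u where "u = (1 / L) *\<^sub>R (c - d)"
  have u: "N u = 1" using L N_scale[OF n] by (simp add: u_def L_def)
  define X where "X = {x. N (u - x) = 1 \<and> N (0 - x) = 1}"
  have cX: "card X = 2" unfolding X_def using ur[unfolded URTC_norm_def, rule_format, of u 0] u by simp
  define f where "f s = - (c + s *\<^sub>R (d - c))" for s
  have fX: "f ` {1 / L .. 1} \<subseteq> X"
  proof clarify
    fix s assume s: "s \<in> {1 / L .. 1}"
    have s0: "0 \<le> s" using s L by (auto intro: order_trans[rotated])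
    have "u - f s = c + (s - 1 / L) *\<^sub>R (d - c)"
      by (simp add: f_def u_def algebra_simps)
    moreover have "0 \<le> s - 1 / L" using s by auto
    moreover have "1 / L > 0" using L by simp
    moreover have "s \<le> 1" using s by auto
    moreover from calculation have "s - 1 / L \<le> 1" by linarith
    ultimately have "N (u - f s) = 1" using seg by simp
    moreover have "N (0 - f s) = 1" using seg[of s] s s0 by (simp add: f_def add.commute)
    ultimately show "f s \<in> X" by (simp add: X_def)
  qed
  have dc: "d \<noteq> c" using cd N_zero[OF n] by auto
  have inj: "inj_on f {1 / L .. 1}"
  proof (rule inj_onI)
    fix s t assume "f s = f t"
    then have "(s - t) *\<^sub>R (d - c) = 0" by (simp add: f_def algebra_simps)
    then show "s = t" using dc by simp
  qed
  have "finite X" using cX card.infinite by fastforce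
  then have "finite (f ` {1 / L .. 1})" using fX finite_subset by blast
  then have "finite {1 / L .. 1}" using finite_imageD inj by blast
  moreover have "1 / L < 1" using L by simp
  ultimately show False using infinite_Icc by blast
qed

theorem lemma1:
  fixes N :: "real^2 \<Rightarrow> real"
  assumes "is_norm N"
  shows "(\<not> URTC_norm N \<longleftrightarrow>
            (\<exists>c d. c \<in> unit_sphere N \<and> d \<in> unit_sphere N \<and> N (c - d) > 1 \<and>
                   {c + t *\<^sub>R (d - c) | t. 0 \<le> t \<and> t \<le> 1} \<subseteq> unit_sphere N))
         \<and> (strictly_convex_norm N \<longrightarrow> URTC_norm N)"
proof
  show "(\<not> URTC_norm N \<longleftrightarrow>
            (\<exists>c d. c \<in> unit_sphere N \<and> d \<in> unit_sphere N \<and> N (c - d) > 1 \<and>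
                   {c + t *\<^sub>R (d - c) | t. 0 \<le> t \<and> t \<le> 1} \<subseteq> unit_sphere N))"
    using dir1[OF assms] dir2[OF assms] unfolding concl_def by blast
  show "strictly_convex_norm N \<longrightarrow> URTC_norm N"
  proof
    assume sc: "strictly_convex_norm N"
    show "URTC_norm N"
    proof (rule ccontr)
      assume "\<not> URTC_norm N"
      then obtain c d where cd: "N (c - d) > 1"
        and sg: "{c + t *\<^sub>R (d - c) | t. 0 \<le> t \<and> t \<le> 1} \<subseteq> unit_sphere N"
        using dir1[OF assms] unfolding concl_def by blast
      have "c \<noteq> d" using cd N_zero[OF assms] by auto
      moreover have "closed_segment c d \<subseteq> unit_sphere N"
      proof
        fix x assume "x \<in> closed_segment c d"
        then obtain t where t: "0 \<le> t" "t \<le> 1" "x = (1 - t) *\<^sub>R c + t *\<^sub>R d"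
          unfolding closed_segment_def by blast
        then have "x = c + t *\<^sub>R (d - c)" by (simp add: algebra_simps)
        then show "x \<in> unit_sphere N" using sg t by blast
      qed
      ultimately show False using sc unfolding strictly_convex_norm_def by blast
    qed
  qed
qed

end
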